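(* Let $\psi\in\mathrm{Sp}_0(V,\omega)$ be fixed. For every $\Phi\in\mathrm{Sp}_\psi(V,\omega)$ the linear operator \[ \mathcal C_\psi(\Phi)=J(\psi-\mathrm{Id})(\Phi-\psi)^{-1}(\Phi-\mathrm{Id}):V\to V \] is symmetric with respect to $\langle\cdot,\cdot\rangle$, and $\mathrm{Ker}\big(\mathcal C_\psi(\Phi)\big)=\mathrm{Ker}(\Phi-\mathrm{Id})$.
   Context: Let $(V,\omega)$ be a real symplectic vector space of finite dimension and $\mathrm{Sp}(V,\omega)$ its symplectic group. Fix a linear map $J:V\to V$ with $J^2=-\mathrm{Id}$ and a positive definite inner product $\langle\cdot,\cdot\rangle$ on $V$ such that $\omega(u,v)=\langle Ju,v\rangle$ for all $u,v\in V$. For $\psi\in\mathrm{Sp}(V,\omega)$, $\mathrm{Sp}_\psi(V,\omega)$ denotes the set of $\Phi\in\mathrm{Sp}(V,\omega)$ such that $\Phi-\psi$ is invertible, and $\mathrm{Sp}_0(V,\omega)=\mathrm{Sp}_{\mathrm{Id}}(V,\omega)$. *)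

theory Defs
  imports "HOL-Analysis.Analysis"
begin

definition symplectic_form :: "('a::real_vector \<Rightarrow> 'a \<Rightarrow> real) \<Rightarrow> bool" where
  "symplectic_form \<omega> \<longleftrightarrow> bilinear \<omega> \<and> (\<forall>u v. \<omega> u v = - \<omega> v u) \<and>
     (\<forall>u. (\<forall>v. \<omega> u v = 0) \<longrightarrow> u = 0)"

definition Sp :: "('a::real_vector \<Rightarrow> 'a \<Rightarrow> real) \<Rightarrow> ('a \<Rightarrow> 'a) set" where
  "Sp \<omega> = {\<Phi>. linear \<Phi> \<and> bij \<Phi> \<and> (\<forall>u v. \<omega> (\<Phi> u) (\<Phi> v) = \<omega> u v)}"

definition Sp_psi :: "('a::real_vector \<Rightarrow> 'a \<Rightarrow> real) \<Rightarrow> ('a \<Rightarrow> 'a) \<Rightarrow> ('a \<Rightarrow> 'a) set" where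
  "Sp_psi \<omega> \<psi> = {\<Phi> \<in> Sp \<omega>. bij (\<lambda>x. \<Phi> x - \<psi> x)}"

abbreviation Sp0 :: "('a::real_vector \<Rightarrow> 'a \<Rightarrow> real) \<Rightarrow> ('a \<Rightarrow> 'a) set" where
  "Sp0 \<omega> \<equiv> Sp_psi \<omega> id"

definition C_psi :: "('a::real_vector \<Rightarrow> 'a) \<Rightarrow> ('a \<Rightarrow> 'a) \<Rightarrow> ('a \<Rightarrow> 'a) \<Rightarrow> ('a \<Rightarrow> 'a)" where
  "C_psi J \<psi> \<Phi> = J \<circ> (\<lambda>x. \<psi> x - x) \<circ> inv (\<lambda>x. \<Phi> x - \<psi> x) \<circ> (\<lambda>x. \<Phi> x - x)"

end

theory Submission
  imports Defs
begin

theorem lemma2p6: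
  fixes \<omega> :: "'a::euclidean_space \<Rightarrow> 'a \<Rightarrow> real"
    and J \<psi> \<Phi> :: "'a \<Rightarrow> 'a"
  assumes "symplectic_form \<omega>"
    and "linear J" and "\<And>x. J (J x) = - x"
    and "\<And>u v. \<omega> u v = inner (J u) v"
    and "\<psi> \<in> Sp0 \<omega>"
    and "\<Phi> \<in> Sp_psi \<omega> \<psi>"
  shows "(\<forall>u v. inner (C_psi J \<psi> \<Phi> u) v = inner u (C_psi J \<psi> \<Phi> v))
    \<and> {v. C_psi J \<psi> \<Phi> v = 0} = {v. \<Phi> v - v = 0}"
proof -
  have skew: "\<And>a b. inner (J a) b = - inner (J b) a"
    using assms(1,4) unfolding symplectic_form_def by metis
  have lP: "linear \<Phi>" and sP: "\<And>a b. inner (J (\<Phi> a)) (\<Phi> b) = inner (J a) b"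
    and bA: "bij (\<lambda>x. \<Phi> x - \<psi> x)"
    using assms(4,6) unfolding Sp_psi_def Sp_def by auto
  have lS: "linear \<psi>" and sS: "\<And>a b. inner (J (\<psi> a)) (\<psi> b) = inner (J a) b"
    and bB: "bij (\<lambda>x. \<psi> x - id x)"
    using assms(4,5) unfolding Sp_psi_def Sp_def by auto
  define A where "A = (\<lambda>x. \<Phi> x - \<psi> x)"
  have AinvA: "\<And>z. A (inv A z) = z" using bA unfolding A_def[symmetric] by (meson bij_is_surj surj_f_inv_f)
  have invAA: "\<And>z. inv A (A z) = z" using bA unfolding A_def[symmetric] by (meson bij_is_inj inv_f_f)
  have C: "C_psi J \<psi> \<Phi> u = J (\<psi> (inv A (\<Phi> u - u)) - inv A (\<Phi> u - u))" for u
    unfolding C_psi_def A_def by simp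
  have key: "inner (J (\<psi> x - x)) v = inner u (J (\<psi> y - y))"
    if x: "x = inv A (\<Phi> u - u)" and y: "y = inv A (\<Phi> v - v)" for u v x y
  proof -
    have ex: "\<Phi> x - \<psi> x = \<Phi> u - u" using AinvA[of "\<Phi> u - u"] x unfolding A_def by simp
    have ey: "\<Phi> y - \<psi> y = \<Phi> v - v" using AinvA[of "\<Phi> v - v"] y unfolding A_def by simp
    have px: "\<Phi> (x - u) = \<psi> x - u" proof -
      have "\<Phi> x = (\<Phi> u - u) + \<psi> x" by (subst ex[symmetric]) simp
      thus ?thesis by (simp add: linear_diff[OF lP])
    qed
    have py: "\<Phi> (y - v) = \<psi> y - v" proof -
      have "\<Phi> y = (\<Phi> v - v) + \<psi> y" by (subst ey[symmetric]) simp
      thus ?thesis by (simp add: linear_diff[OF lP])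
    qed
    have "inner (J (\<psi> x - u)) (\<psi> y - v) = inner (J (x - u)) (y - v)"
      using sP[of "x - u" "y - v"] px py by simp
    hence "inner (J (\<psi> x)) (\<psi> y) - inner (J (\<psi> x)) v - inner (J u) (\<psi> y) + inner (J u) v
        = inner (J x) y - inner (J x) v - inner (J u) y + inner (J u) v"
      by (simp add: linear_diff[OF assms(2)] inner_diff_left inner_diff_right)
    hence "inner (J (\<psi> x)) v + inner (J u) (\<psi> y) = inner (J x) v + inner (J u) y"
      using sS[of x y] by simp
    moreover have "inner (J u) (\<psi> y) = - inner (J (\<psi> y)) u" by (rule skew)
    moreover have "inner (J u) y = - inner (J y) u" by (rule skew)
    ultimately show ?thesis
      by (simp add: linear_diff[OF assms(2)] inner_diff_left inner_diff_right inner_commute algebra_simps)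
  qed
  have sym: "\<forall>u v. inner (C_psi J \<psi> \<Phi> u) v = inner u (C_psi J \<psi> \<Phi> v)"
    using key C by simp
  have J0: "J 0 = 0" using linear_0[OF assms(2)] .
  have S0: "\<psi> 0 = 0" using linear_0[OF lS] .
  have A0: "A 0 = 0" using linear_0[OF lP] S0 unfolding A_def by simp
  have iA0: "inv A 0 = 0" using invAA[of 0] A0 by simp
  have ker: "C_psi J \<psi> \<Phi> v = 0 \<longleftrightarrow> \<Phi> v - v = 0" for v
  proof
    assume h: "C_psi J \<psi> \<Phi> v = 0"
    define x where "x = inv A (\<Phi> v - v)"
    have "J (\<psi> x - x) = 0" using h C x_def by simp
    hence "\<psi> x - x = 0" using assms(3)[of "\<psi> x - x"] J0 by simp
    hence "(\<lambda>x. \<psi> x - id x) x = (\<lambda>x. \<psi> x - id x) 0" using S0 by simp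
    hence "x = 0" using bB unfolding bij_def inj_def by blast
    thus "\<Phi> v - v = 0" using AinvA[of "\<Phi> v - v"] A0 x_def by simp
  next
    assume "\<Phi> v - v = 0"
    thus "C_psi J \<psi> \<Phi> v = 0" using C iA0 S0 J0 by simp
  qed
  show ?thesis using sym ker by auto
qed

end
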